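(* Let $k\le l$ be positive integers with $\gcd(k,l)=1$, let $n\ge 1$ and $m\ge 0$ be integers, and write $m=qn+r$ with integers $q\ge0$, $0\le r<n$. Then there exists $A\in\mathcal D^{k,l}(m,n)$ such that ${\rm tdet}(A)\le nk(q+1)$.
   Context: $\mathcal D^{k,l}(m,n)$ denotes the set of all $nk\times nl$ matrices with nonnegative integer entries all of whose row sums equal $ml$ and all of whose column sums equal $mk$. For an $s\times t$ matrix $A=(a_{ij})$ with $s\le t$, a transversal of $A$ is a set of entries $T=\{a_{1i_1},\dots,a_{si_s}\}$ with $i_1,\dots,i_s\in\{1,\dots,t\}$ pairwise distinct, and $|T|=a_{1i_1}+\cdots+a_{si_s}$; if $s>t$, the transversals of $A$ are those of its transpose. The tropical determinant is ${\rm tdet}(A)=\max_T|T|$ over all transversals $T$ of $A$. *)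

theory Defs
  imports Main
begin

text \<open>Matrices are represented as functions nat => nat => nat together with explicit
dimensions s (rows, indices 0..<s) and t (columns, indices 0..<t).\<close>

definition in_D :: "nat \<Rightarrow> nat \<Rightarrow> nat \<Rightarrow> nat \<Rightarrow> (nat \<Rightarrow> nat \<Rightarrow> nat) \<Rightarrow> bool" where
  "in_D k l m n A \<longleftrightarrow>
     (\<forall>i<n*k. (\<Sum>j<n*l. A i j) = m*l) \<and>
     (\<forall>j<n*l. (\<Sum>i<n*k. A i j) = m*k)"

definition transversal_weights_le :: "nat \<Rightarrow> nat \<Rightarrow> (nat \<Rightarrow> nat \<Rightarrow> nat) \<Rightarrow> nat set" where
  "transversal_weights_le s t A =
     {(\<Sum>i<s. A i (f i)) | f. f ` {..<s} \<subseteq> {..<t} \<and> inj_on f {..<s}}"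

definition transversal_weights :: "nat \<Rightarrow> nat \<Rightarrow> (nat \<Rightarrow> nat \<Rightarrow> nat) \<Rightarrow> nat set" where
  "transversal_weights s t A =
     (if s \<le> t then transversal_weights_le s t A
      else transversal_weights_le t s (\<lambda>i j. A j i))"

definition tdet :: "nat \<Rightarrow> nat \<Rightarrow> (nat \<Rightarrow> nat \<Rightarrow> nat) \<Rightarrow> nat" where
  "tdet s t A = Max (transversal_weights s t A)"

end

theory Submission imports Defs begin
lemma sum_blocks: "(\<Sum>j<n*l. g (j div l)) = l * (\<Sum>b<n. (g b::nat))"
proof (induction n)
  case 0 then show ?case by simp
next
  case (Suc n)
  have "(\<Sum>j<Suc n*l. g (j div l)) = (\<Sum>j\<in>{0..<n*l}. g (j div l)) + (\<Sum>j\<in>{n*l..<n*l+l}. g (j div l))"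
    by (subst sum.atLeastLessThan_concat) (auto simp: lessThan_atLeast0 add.commute)
  also have "(\<Sum>j\<in>{n*l..<n*l+l}. g (j div l)) = (\<Sum>j\<in>{n*l..<n*l+l}. g n)"
    by (rule sum.cong) (auto intro!: arg_cong[where f=g] div_nat_eqI simp: algebra_simps)
  finally show ?case using Suc by (simp add: lessThan_atLeast0 algebra_simps)
qed

lemma aux: "(a+b) mod (n::nat) = (a+c) mod n \<Longrightarrow> b \<le> c \<Longrightarrow> c < n \<Longrightarrow> b = c"
proof -
  assume e: "(a+b) mod (n::nat) = (a+c) mod n" and bc: "b \<le> c" and cn: "c < n"
  have "n dvd (a+c) - (a+b)" using e bc mod_eq_dvd_iff_nat[of "a+b" "a+c" n] by simp
  then have "n dvd c - b" by simp
  moreover have "c - b < n" using cn by simp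
  ultimately have "c - b = 0" using nat_dvd_not_less by (metis gr0I)
  then show "b = c" using bc by simp
qed

lemma inj_shift: "inj_on (\<lambda>b. (a+b) mod (n::nat)) {..<n}"
  unfolding inj_on_def
proof (intro ballI impI)
  fix b c assume b: "b \<in> {..<n}" and c: "c \<in> {..<n}" and e: "(a+b) mod n = (a+c) mod n"
  show "b = c" using b c e aux[of a b n c] aux[of a c n b] by (cases "b \<le> c") auto
qed
   
lemma count_shift: assumes "r \<le> n" shows "(\<Sum>b<n. (if (a+b) mod n < r then 1 else 0::nat)) = r"
proof -
  have im: "(\<lambda>b. (a+b) mod n) ` {..<n} = {..<n}"
    apply (rule endo_inj_surj) using inj_shift by auto
  have "(\<Sum>b<n. (if (a+b) mod n < r then 1 else 0::nat)) = (\<Sum>c\<in>(\<lambda>b. (a+b) mod n) ` {..<n}. (if c < r then 1 else 0::nat))"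
    by (subst sum.reindex[OF inj_shift]) simp
  also have "\<dots> = (\<Sum>c<n. (if c < r then 1 else 0::nat))" using im by simp
  also have "\<dots> = card ({..<n} \<inter> {c. c < r})" by (simp add: sum.If_cases)
  also have "{..<n} \<inter> {c. c < r} = {..<r}" using assms by auto
  finally show ?thesis by simp
qed

theorem proposition3p1:
  fixes k l n m q r :: nat
  assumes "0 < k" and "k \<le> l" and "gcd k l = 1"
    and "1 \<le> n" and "m = q * n + r" and "r < n"
  shows "\<exists>A. in_D k l m n A \<and> tdet (n*k) (n*l) A \<le> n * k * (q + 1)"
proof -
  define A where "A = (\<lambda>i j. q + (if (i div k + j div l) mod n < r then 1 else 0::nat))"
  have rows: "(\<Sum>j<n*l. A i j) = m*l" if "i < n*k" for i
  proof -
    have "(\<Sum>j<n*l. A i j) = n*l*q + (\<Sum>j<n*l. (\<lambda>b. if (i div k + b) mod n < r then 1 else 0::nat) (j div l))"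
      by (simp add: A_def sum.distrib)
    also have "\<dots> = n*l*q + l * r" using sum_blocks[where n=n and l=l and g="\<lambda>b. if (i div k + b) mod n < r then 1 else 0::nat"] count_shift[of r n "i div k"] assms(6) by simp
    finally show ?thesis using assms(5) by (simp add: algebra_simps)
  qed
  have cols: "(\<Sum>i<n*k. A i j) = m*k" if "j < n*l" for j
  proof -
    have "(\<Sum>i<n*k. A i j) = n*k*q + (\<Sum>i<n*k. (\<lambda>a. if (j div l + a) mod n < r then 1 else 0::nat) (i div k))"
      by (simp add: A_def sum.distrib add.commute)
    also have "\<dots> = n*k*q + k * r" using sum_blocks[where n=n and l=k and g="\<lambda>a. if (j div l + a) mod n < r then 1 else 0::nat"] count_shift[of r n "j div l"] assms(6) by simp
    finally show ?thesis using assms(5) by (simp add: algebra_simps)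
  qed
  have D: "in_D k l m n A" unfolding in_D_def using rows cols by blast
  let ?S = "transversal_weights (n*k) (n*l) A"
  have le: "n*k \<le> n*l" using assms(2) by simp
  have S: "?S = transversal_weights_le (n*k) (n*l) A"
    unfolding transversal_weights_def using le by simp
  have bnd: "x \<le> n*k*(q+1)" if "x \<in> ?S" for x
  proof -
    from that obtain f where x: "x = (\<Sum>i<n*k. A i (f i))" unfolding S transversal_weights_le_def by blast
    have "(\<Sum>i<n*k. A i (f i)) \<le> (\<Sum>i<n*k. q+1)" by (rule sum_mono) (simp add: A_def)
    then show ?thesis using x by simp
  qed
  have ne: "(\<Sum>i<n*k. A i i) \<in> ?S" unfolding S transversal_weights_le_def using le by (intro CollectI exI[of _ "\<lambda>i. i"]) auto
  have fin: "finite ?S" using bnd by (meson finite_atMost finite_subset atMost_iff subsetI)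
  have "tdet (n*k) (n*l) A \<in> ?S" unfolding tdet_def using fin ne by (intro Max_in) auto
  then show ?thesis using D bnd by blast
qed

end
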